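(* Under the setting of SPPM-LC (see context), assume each $f_\xi$ is differentiable and $\mu$-strongly convex ($\mu>0$), let $x_\star$ be the minimizer of $f=\mathbb{E}_{\xi\sim\mathcal{D}}[f_\xi]$, and suppose the $\sigma_k^2$-assumption holds. Then for every $\gamma>0$ and $k\ge0$, $$\mathbb{E}\|x_{k+1}-x_\star\|^2\le\frac{1+\gamma^2A_1}{(1+\gamma\mu)^2}\mathbb{E}\|x_k-x_\star\|^2+\frac{\gamma^2B_1}{(1+\gamma\mu)^2}\mathbb{E}[\sigma_k^2]+\frac{\gamma^2C_1}{(1+\gamma\mu)^2}.$$
   Context: Notation: $\operatorname{prox}_{\gamma\phi}(y):=\arg\min_{x\in\mathbb{R}^d}\{\phi(x)+\frac{1}{2\gamma}\|x-y\|^2\}$; $\nabla f(x)=\mathbb{E}_{\xi\sim\mathcal{D}}[\nabla f_\xi(x)]$. Algorithm SPPM-LC: parameters $\gamma>0$, $x_0\in\mathbb{R}^d$, $\phi_0\in\mathbb{R}^m$. For $k=0,1,\dots$: sample $\xi_k\sim\mathcal{D}$ independently of the past; form $h_k\in\mathbb{R}^d$ as a function of $x_k,\phi_k,\xi_k$; set $x_{k+1}=\operatorname{prox}_{\gamma f_{\xi_k}}(x_k+\gamma h_k)$; construct a new (possibly random) control vector $\phi_{k+1}\in\mathbb{R}^m$. $\sigma_k^2$-assumption: there exist $\sigma^2:\mathbb{R}^m\to\mathbb{R}_+$ and nonnegative constants $A_1,B_1,C_1,A_2,B_2,C_2$, $B_2<1$, such that with $\sigma_k^2:=\sigma^2(\phi_k)$: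 (i) $\mathbb{E}[h_k\mid x_k,\phi_k]=0$; (ii) $\mathbb{E}[\|h_k-\nabla f_{\xi_k}(x_\star)\|^2\mid x_k,\phi_k]\le A_1\|x_k-x_\star\|^2+B_1\sigma_k^2+C_1$; (iii) $\mathbb{E}[\sigma_{k+1}^2\mid x_{k+1},\phi_k]\le A_2\|x_{k+1}-x_\star\|^2+B_2\sigma_k^2+C_2$. *)

theory Defs
  imports "HOL-Analysis.Analysis" "HOL-Probability.Probability"
begin

definition prox :: "real \<Rightarrow> ('d::euclidean_space \<Rightarrow> real) \<Rightarrow> 'd \<Rightarrow> 'd" where
  "prox \<gamma> \<phi> y = (THE x. \<forall>z. \<phi> x + (norm (x - y))\<^sup>2 / (2 * \<gamma>) \<le> \<phi> z + (norm (z - y))\<^sup>2 / (2 * \<gamma>))"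

definition strongly_convex :: "real \<Rightarrow> ('d::euclidean_space \<Rightarrow> real) \<Rightarrow> bool" where
  "strongly_convex \<mu> f \<longleftrightarrow> convex_on UNIV (\<lambda>x. f x - \<mu> / 2 * (norm x)\<^sup>2)"

definition gen_alg :: "'a measure \<Rightarrow> ('a \<Rightarrow> 'b::topological_space) \<Rightarrow> 'a measure" where
  "gen_alg M X = vimage_algebra (space M) X borel"

definition past_events ::
  "'a measure \<Rightarrow> 'e measure \<Rightarrow> (nat \<Rightarrow> 'a \<Rightarrow> 'd::topological_space) \<Rightarrow> (nat \<Rightarrow> 'a \<Rightarrow> 'm::topological_space)
     \<Rightarrow> (nat \<Rightarrow> 'a \<Rightarrow> 'e) \<Rightarrow> nat \<Rightarrow> 'a set set" where
  "past_events M D x \<phi> \<xi> k = sigma_sets (space M)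
     ((\<Union>j\<le>k. {x j -` A \<inter> space M | A. A \<in> sets borel})
      \<union> (\<Union>j\<le>k. {\<phi> j -` A \<inter> space M | A. A \<in> sets borel})
      \<union> (\<Union>j<k. {\<xi> j -` A \<inter> space M | A. A \<in> sets D}))"

definition var_events :: "'a measure \<Rightarrow> 'e measure \<Rightarrow> ('a \<Rightarrow> 'e) \<Rightarrow> 'a set set" where
  "var_events M D X = {X -` A \<inter> space M | A. A \<in> sets D}"

end

theory Submission
  imports Defs
begin


lemma tangent_ineq:
  fixes g :: "'d::euclidean_space \<Rightarrow> real"
  assumes cv: "convex_on UNIV g" and dg: "(g has_derivative (\<lambda>v. d \<bullet> v)) (at x)"
  shows "g y \<ge> g x + d \<bullet> (y - x)"
proof -
  define \<phi> where "\<phi> = (\<lambda>t::real. g (x + t *\<^sub>R (y - x)))"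
  have cphi: "convex_on UNIV \<phi>"
  proof (rule convex_onI)
    fix t a b :: real assume t: "t > 0" "t < 1"
    have "x + ((1 - t) *\<^sub>R a + t *\<^sub>R b) *\<^sub>R (y - x) = (1 - t) *\<^sub>R (x + a *\<^sub>R (y - x)) + t *\<^sub>R (x + b *\<^sub>R (y - x))"
      by (simp add: algebra_simps)
    then show "\<phi> ((1 - t) *\<^sub>R a + t *\<^sub>R b) \<le> (1 - t) * \<phi> a + t * \<phi> b"
      unfolding \<phi>_def using convex_onD[OF cv, of t] t by auto
  qed simp
  have "((\<lambda>t::real. x + t *\<^sub>R (y - x)) has_derivative (\<lambda>t. t *\<^sub>R (y - x))) (at 0)"
    by (intro derivative_eq_intros) auto
  from has_derivative_compose[OF this, of g "\<lambda>v. d \<bullet> v"] dg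
  have "(\<phi> has_derivative (\<lambda>t. d \<bullet> (t *\<^sub>R (y - x)))) (at 0)"
    unfolding \<phi>_def by simp
  moreover have "(\<lambda>t. d \<bullet> (t *\<^sub>R (y - x))) = (*) (d \<bullet> (y - x))" by (auto simp: fun_eq_iff)
  ultimately have "(\<phi> has_field_derivative (d \<bullet> (y - x))) (at 0)"
    unfolding has_field_derivative_def by simp
  from convex_on_imp_above_tangent[OF cphi _ _ _ this, of 1]
  have "\<phi> 1 - \<phi> 0 \<ge> d \<bullet> (y - x)" by simp
  then show ?thesis unfolding \<phi>_def by simp
qed

lemma sc_lower:
  fixes f :: "'d::euclidean_space \<Rightarrow> real"
  assumes sc: "strongly_convex \<mu> f" and gr: "\<And>x. (f has_derivative (\<lambda>v. gf x \<bullet> v)) (at x)"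
  shows "f y \<ge> f x + gf x \<bullet> (y - x) + \<mu> / 2 * (norm (y - x))\<^sup>2"
proof -
  have cv: "convex_on UNIV (\<lambda>x. f x - \<mu> / 2 * (x \<bullet> x))"
    using sc unfolding strongly_convex_def by (simp add: power2_norm_eq_inner)
  have "((\<lambda>x. f x - \<mu> / 2 * (x \<bullet> x)) has_derivative (\<lambda>v. gf x \<bullet> v - \<mu> / 2 * (x \<bullet> v + v \<bullet> x))) (at x)"
    by (intro derivative_eq_intros) (auto intro: gr)
  moreover have "(\<lambda>v. gf x \<bullet> v - \<mu> / 2 * (x \<bullet> v + v \<bullet> x)) = (\<lambda>v. (gf x - \<mu> *\<^sub>R x) \<bullet> v)"
    by (auto simp: fun_eq_iff inner_diff_right inner_diff_left inner_commute)
  ultimately have "((\<lambda>x. f x - \<mu> / 2 * (x \<bullet> x)) has_derivative (\<lambda>v. (gf x - \<mu> *\<^sub>R x) \<bullet> v)) (at x)" by simp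
  from tangent_ineq[OF cv this, of y]
  have "f y - \<mu> / 2 * (y \<bullet> y) \<ge> f x - \<mu> / 2 * (x \<bullet> x) + (gf x - \<mu> *\<^sub>R x) \<bullet> (y - x)" .
  moreover have "(norm (y - x))\<^sup>2 = y \<bullet> y - 2 * (x \<bullet> y) + x \<bullet> x"
    by (simp add: power2_norm_eq_inner inner_diff_left inner_diff_right inner_commute)
  ultimately have A: "f y - \<mu> / 2 * (y \<bullet> y) \<ge> f x - \<mu> / 2 * (x \<bullet> x) + (gf x - \<mu> *\<^sub>R x) \<bullet> (y - x)"
    and B: "(norm (y - x))\<^sup>2 = y \<bullet> y - 2 * (x \<bullet> y) + x \<bullet> x" by blast+
  have C: "(gf x - \<mu> *\<^sub>R x) \<bullet> (y - x) = gf x \<bullet> (y - x) - \<mu> * (x \<bullet> y) + \<mu> * (x \<bullet> x)"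
    by (simp add: inner_diff_left inner_diff_right algebra_simps)
  have D: "\<mu> / 2 * (norm (y - x))\<^sup>2 = \<mu> / 2 * (y \<bullet> y) - \<mu> * (x \<bullet> y) + \<mu> / 2 * (x \<bullet> x)"
    unfolding B by (simp add: algebra_simps)
  show ?thesis using A C D by linarith
qed

lemma sc_mono:
  fixes f :: "'d::euclidean_space \<Rightarrow> real"
  assumes sc: "strongly_convex \<mu> f" and gr: "\<And>x. (f has_derivative (\<lambda>v. gf x \<bullet> v)) (at x)"
  shows "(gf x - gf y) \<bullet> (x - y) \<ge> \<mu> * (norm (x - y))\<^sup>2"
proof -
  have a: "f y \<ge> f x + gf x \<bullet> (y - x) + \<mu> / 2 * (norm (y - x))\<^sup>2" by (rule sc_lower[OF sc gr])
  have b: "f x \<ge> f y + gf y \<bullet> (x - y) + \<mu> / 2 * (norm (x - y))\<^sup>2" by (rule sc_lower[OF sc gr])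
  have "norm (y - x) = norm (x - y)" by (rule norm_minus_commute)
  with a b show ?thesis by (simp add: inner_diff_left inner_diff_right algebra_simps)
qed

definition proxP :: "real \<Rightarrow> ('d::euclidean_space \<Rightarrow> real) \<Rightarrow> 'd \<Rightarrow> 'd \<Rightarrow> bool" where
  "proxP \<gamma> \<phi> y x \<longleftrightarrow> (\<forall>z. \<phi> x + (norm (x - y))\<^sup>2 / (2 * \<gamma>) \<le> \<phi> z + (norm (z - y))\<^sup>2 / (2 * \<gamma>))"

lemma prox_char:
  fixes f :: "'d::euclidean_space \<Rightarrow> real"
  assumes gr: "\<And>x. (f has_derivative (\<lambda>v. gf x \<bullet> v)) (at x)" and g: "\<gamma> > 0"
    and P: "proxP \<gamma> f y p"
  shows "p + \<gamma> *\<^sub>R gf p = y"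
proof -
  let ?F = "\<lambda>z. f z + ((z - y) \<bullet> (z - y)) / (2 * \<gamma>)"
  have d: "(?F has_derivative (\<lambda>v. gf p \<bullet> v + (v \<bullet> (p - y) + (p - y) \<bullet> v) / (2 * \<gamma>))) (at p)"
    using g by (intro derivative_eq_intros) (auto intro: gr)
  have "eventually (\<lambda>z. ?F p \<le> ?F z) (at p)"
    using P unfolding proxP_def by (simp add: power2_norm_eq_inner)
  from has_derivative_local_min[OF d this]
  have "(\<lambda>v. gf p \<bullet> v + (v \<bullet> (p - y) + (p - y) \<bullet> v) / (2 * \<gamma>)) = (\<lambda>v. 0)" .
  define v where "v = gf p + (p - y) /\<^sub>R \<gamma>"
  have z: "gf p \<bullet> v + (v \<bullet> (p - y) + (p - y) \<bullet> v) / (2 * \<gamma>) = 0"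
    by (metis (no_types, lifting) \<open>_ = (\<lambda>v. 0)\<close>)
  have "(v \<bullet> (p - y) + (p - y) \<bullet> v) / (2 * \<gamma>) = ((p - y) \<bullet> v) / \<gamma>"
    using g by (simp add: inner_commute)
  also have "\<dots> = ((p - y) /\<^sub>R \<gamma>) \<bullet> v" by (simp add: divide_inverse mult.commute)
  finally have e1: "(v \<bullet> (p - y) + (p - y) \<bullet> v) / (2 * \<gamma>) = ((p - y) /\<^sub>R \<gamma>) \<bullet> v" .
  have "v \<bullet> v = (gf p + (p - y) /\<^sub>R \<gamma>) \<bullet> v" using v_def by metis
  also have "\<dots> = gf p \<bullet> v + ((p - y) /\<^sub>R \<gamma>) \<bullet> v" by (rule inner_add_left)
  also have "\<dots> = 0" using z e1 by simp
  finally have "v \<bullet> v = 0" .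
  then have "gf p + (p - y) /\<^sub>R \<gamma> = 0" unfolding v_def by simp
  then have "\<gamma> *\<^sub>R (gf p + (p - y) /\<^sub>R \<gamma>) = 0" by simp
  then show ?thesis using g by (simp add: algebra_simps)
qed

lemma prox_contract:
  fixes f :: "'d::euclidean_space \<Rightarrow> real"
  assumes sc: "strongly_convex \<mu> f" and mu: "\<mu> \<ge> 0"
    and gr: "\<And>x. (f has_derivative (\<lambda>v. gf x \<bullet> v)) (at x)" and g: "\<gamma> > 0"
    and P: "proxP \<gamma> f y p"
  shows "(1 + \<gamma> * \<mu>) * norm (p - z) \<le> norm (y - (z + \<gamma> *\<^sub>R gf z))"
proof -
  have y: "y = p + \<gamma> *\<^sub>R gf p" using prox_char[OF gr g P] by simp
  have m: "(gf p - gf z) \<bullet> (p - z) \<ge> \<mu> * (norm (p - z))\<^sup>2" by (rule sc_mono[OF sc gr])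
  have e: "(y - (z + \<gamma> *\<^sub>R gf z)) \<bullet> (p - z) = (norm (p - z))\<^sup>2 + \<gamma> * ((gf p - gf z) \<bullet> (p - z))"
    unfolding y by (simp add: power2_norm_eq_inner inner_diff_left inner_diff_right inner_add_left algebra_simps)
  have "(1 + \<gamma> * \<mu>) * (norm (p - z))\<^sup>2 \<le> (y - (z + \<gamma> *\<^sub>R gf z)) \<bullet> (p - z)"
    unfolding e using mult_left_mono[OF m, of \<gamma>] g by (simp add: algebra_simps)
  also have "\<dots> \<le> norm (y - (z + \<gamma> *\<^sub>R gf z)) * norm (p - z)" by (rule norm_cauchy_schwarz)
  finally have *: "(1 + \<gamma> * \<mu>) * norm (p - z) * norm (p - z) \<le> norm (y - (z + \<gamma> *\<^sub>R gf z)) * norm (p - z)"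
    by (simp add: power2_eq_square mult.assoc)
  show ?thesis
  proof (cases "p = z")
    case True then show ?thesis by simp
  next
    case False then have "norm (p - z) > 0" by simp
    with * show ?thesis by (simp add: mult_le_cancel_right)
  qed
qed

lemma prox_exists:
  fixes f :: "'d::euclidean_space \<Rightarrow> real"
  assumes sc: "strongly_convex \<mu> f" and mu: "\<mu> > 0"
    and gr: "\<And>x. (f has_derivative (\<lambda>v. gf x \<bullet> v)) (at x)" and g: "\<gamma> > 0"
  shows "\<exists>p. proxP \<gamma> f y p"
proof -
  let ?F = "\<lambda>z. f z + (norm (z - y))\<^sup>2 / (2 * \<gamma>)"
  define G where "G = norm (gf 0)"
  define c where "c = (norm y)\<^sup>2 / (2 * \<gamma>)"
  define R where "R = (2 * G + 2 * c) / \<mu> + 1"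
  have G0: "G \<ge> 0" and c0: "c \<ge> 0" using g by (auto simp: G_def c_def)
  have R1: "R \<ge> 1" using G0 c0 mu by (simp add: R_def)
  have contf: "continuous_on UNIV f"
    using gr by (meson continuous_at_imp_continuous_on has_derivative_continuous)
  have cont: "continuous_on (cball 0 R) ?F"
    using g by (intro continuous_intros continuous_on_subset[OF contf]) auto
  obtain p where p: "p \<in> cball 0 R" and pmin: "\<And>z. z \<in> cball 0 R \<Longrightarrow> ?F p \<le> ?F z"
    using continuous_attains_inf[OF compact_cball _ cont] R1 by fastforce
  have F0: "?F p \<le> f 0 + c" using pmin[of 0] R1 by (simp add: c_def)
  have "?F p \<le> ?F z" for z
  proof (cases "z \<in> cball 0 R")
    case True then show ?thesis by (rule pmin)
  next
    case False
    define r where "r = norm z"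
    have rR: "r > R" using False by (simp add: r_def)
    have low: "f z \<ge> f 0 + gf 0 \<bullet> z + \<mu> / 2 * r\<^sup>2"
      using sc_lower[OF sc gr, of 0 z] by (simp add: r_def)
    have "gf 0 \<bullet> z \<ge> - (G * r)"
      using norm_cauchy_schwarz[of "- gf 0" z] by (simp add: G_def r_def)
    have "\<mu> / 2 * r \<ge> \<mu> / 2 * R" using rR mu by simp
    also have "\<mu> / 2 * R = G + c + \<mu> / 2" using mu by (simp add: R_def field_simps)
    finally have h1: "\<mu> / 2 * r - G \<ge> c + \<mu> / 2" by simp
    have "1 * (c + \<mu> / 2) \<le> r * (\<mu> / 2 * r - G)"
      by (rule mult_mono) (use rR R1 h1 c0 mu in auto)
    then have "\<mu> / 2 * r\<^sup>2 - G * r > c" using mu by (simp add: power2_eq_square algebra_simps)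
    then have "f z > f 0 + c" using low \<open>gf 0 \<bullet> z \<ge> - (G * r)\<close> by linarith
    moreover have "(norm (z - y))\<^sup>2 / (2 * \<gamma>) \<ge> 0" using g by simp
    ultimately show ?thesis using F0 by linarith
  qed
  then show ?thesis unfolding proxP_def by blast
qed

lemma prox_main:
  fixes f :: "'d::euclidean_space \<Rightarrow> real"
  assumes sc: "strongly_convex \<mu> f" and mu: "\<mu> > 0"
    and gr: "\<And>x. (f has_derivative (\<lambda>v. gf x \<bullet> v)) (at x)" and g: "\<gamma> > 0"
  shows "(1 + \<gamma> * \<mu>) * norm (prox \<gamma> f y - z) \<le> norm (y - (z + \<gamma> *\<^sub>R gf z))"
proof -
  obtain p where P: "proxP \<gamma> f y p" using prox_exists[OF sc mu gr g] by blast
  have "prox \<gamma> f y = p"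
    unfolding prox_def
  proof (rule the_equality)
    show "\<forall>z. f p + (norm (p - y))\<^sup>2 / (2 * \<gamma>) \<le> f z + (norm (z - y))\<^sup>2 / (2 * \<gamma>)"
      using P unfolding proxP_def .
  next
    fix q assume "\<forall>z. f q + (norm (q - y))\<^sup>2 / (2 * \<gamma>) \<le> f z + (norm (z - y))\<^sup>2 / (2 * \<gamma>)"
    then have Q: "proxP \<gamma> f y q" unfolding proxP_def .
    have "y = p + \<gamma> *\<^sub>R gf p" using prox_char[OF gr g P] by simp
    then have "(1 + \<gamma> * \<mu>) * norm (q - p) \<le> 0"
      using prox_contract[OF sc _ gr g Q, of p] mu by simp
    moreover have "1 + \<gamma> * \<mu> > 0" using g mu by (simp add: add_pos_pos)
    ultimately show "q = p" by (simp add: mult_le_0_iff)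
  qed
  then show ?thesis using prox_contract[OF sc _ gr g P, of z] mu by simp
qed



lemma abs_mult_le_sq: "\<bar>(a::real) * b\<bar> \<le> a\<^sup>2 + b\<^sup>2"
proof -
  have "0 \<le> (\<bar>a\<bar> - \<bar>b\<bar>)\<^sup>2" by simp
  then have "2 * (\<bar>a\<bar> * \<bar>b\<bar>) \<le> a\<^sup>2 + b\<^sup>2"
    by (simp add: power2_eq_square algebra_simps abs_mult_self)
  moreover have "0 \<le> \<bar>a\<bar> * \<bar>b\<bar>" by simp
  ultimately show ?thesis unfolding abs_mult by linarith
qed

lemma L2_prod:
  fixes f g :: "'a \<Rightarrow> real"
  assumes [measurable]: "f \<in> borel_measurable M" "g \<in> borel_measurable M"
    and "integrable M (\<lambda>x. (f x)\<^sup>2)" "integrable M (\<lambda>x. (g x)\<^sup>2)"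
  shows "integrable M (\<lambda>x. f x * g x)"
proof (rule Bochner_Integration.integrable_bound[of M "\<lambda>x. (f x)\<^sup>2 + (g x)\<^sup>2"])
  show "integrable M (\<lambda>x. (f x)\<^sup>2 + (g x)\<^sup>2)" using assms(3,4) by simp
  show "AE x in M. norm (f x * g x) \<le> norm ((f x)\<^sup>2 + (g x)\<^sup>2)"
    using abs_mult_le_sq by (auto intro!: AE_I2 simp del: abs_mult)
qed simp

lemma (in prob_space) L2_imp_L1:
  fixes f :: "'a \<Rightarrow> real"
  assumes [measurable]: "f \<in> borel_measurable M" and "integrable M (\<lambda>x. (f x)\<^sup>2)"
  shows "integrable M f"
  using L2_prod[where f=f and g="\<lambda>_. 1" and M=M] assms by simp

lemma comp_sq_int:
  fixes Y :: "'a \<Rightarrow> 'd::euclidean_space"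
  assumes [measurable]: "Y \<in> borel_measurable M" and "integrable M (\<lambda>x. (norm (Y x))\<^sup>2)" and b: "b \<in> Basis"
  shows "integrable M (\<lambda>x. (Y x \<bullet> b)\<^sup>2)"
proof (rule Bochner_Integration.integrable_bound[OF assms(2)])
  show "AE x in M. norm ((Y x \<bullet> b)\<^sup>2) \<le> norm ((norm (Y x))\<^sup>2)"
  proof (intro AE_I2)
    fix x
    have "\<bar>Y x \<bullet> b\<bar> \<le> norm (Y x)" using Basis_le_norm[OF b] .
    then have "\<bar>Y x \<bullet> b\<bar>\<^sup>2 \<le> (norm (Y x))\<^sup>2" by (rule power_mono) simp
    then show "norm ((Y x \<bullet> b)\<^sup>2) \<le> norm ((norm (Y x))\<^sup>2)" by simp
  qed
qed simp

lemma (in prob_space) cross_zero: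
  fixes Y H G :: "'a \<Rightarrow> 'd::euclidean_space"
  assumes F: "sigma_finite_subalgebra M F"
    and YF: "Y \<in> borel_measurable F" and [measurable]: "H \<in> borel_measurable M" "G \<in> borel_measurable M"
    and Y2: "integrable M (\<lambda>x. (norm (Y x))\<^sup>2)" and Z2: "integrable M (\<lambda>x. (norm (H x - G x))\<^sup>2)"
    and Gi: "integrable M G" and G0: "\<And>b. b \<in> Basis \<Longrightarrow> (\<integral>x. G x \<bullet> b \<partial>M) = 0"
    and ind: "\<And>b. b \<in> Basis \<Longrightarrow> indep_var borel (\<lambda>x. G x \<bullet> b) borel (\<lambda>x. Y x \<bullet> b)"
    and ce: "\<And>b. b \<in> Basis \<Longrightarrow> AE x in M. real_cond_exp M F (\<lambda>x. H x \<bullet> b) x = 0"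
  shows "integrable M (\<lambda>x. Y x \<bullet> (H x - G x))" "(\<integral>x. Y x \<bullet> (H x - G x) \<partial>M) = 0"
proof -
  interpret sigma_finite_subalgebra M F by (rule F)
  have YM[measurable]: "Y \<in> borel_measurable M" by (rule measurable_from_subalg[OF subalg YF])
  have comp: "integrable M (\<lambda>x. (Y x \<bullet> b) * ((H x - G x) \<bullet> b)) \<and> (\<integral>x. (Y x \<bullet> b) * ((H x - G x) \<bullet> b) \<partial>M) = 0"
    if b: "b \<in> Basis" for b
  proof -
    have YbF[measurable]: "(\<lambda>x. Y x \<bullet> b) \<in> borel_measurable F" using YF by measurable
    have Yb2: "integrable M (\<lambda>x. (Y x \<bullet> b)\<^sup>2)" by (rule comp_sq_int[OF YM Y2 b])
    have Zb2: "integrable M (\<lambda>x. ((H x - G x) \<bullet> b)\<^sup>2)" by (rule comp_sq_int[OF _ Z2 b]) measurable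
    have Yb: "integrable M (\<lambda>x. Y x \<bullet> b)" by (rule L2_imp_L1[OF _ Yb2]) measurable
    have Gb: "integrable M (\<lambda>x. G x \<bullet> b)" using Gi by simp
    have m1: "(\<lambda>x. Y x \<bullet> b) \<in> borel_measurable M" by measurable
    have m2: "(\<lambda>x. (H x - G x) \<bullet> b) \<in> borel_measurable M" by measurable
    have YZ: "integrable M (\<lambda>x. (Y x \<bullet> b) * ((H x - G x) \<bullet> b))"
      by (rule L2_prod[OF m1 m2 Yb2 Zb2])
    have GY: "integrable M (\<lambda>x. (G x \<bullet> b) * (Y x \<bullet> b))"
      by (rule indep_var_integrable[OF ind[OF b] Gb Yb])
    have GYe: "(\<integral>x. (G x \<bullet> b) * (Y x \<bullet> b) \<partial>M) = 0"
      using indep_var_lebesgue_integral[OF ind[OF b] Gb Yb] G0[OF b] by simp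
    have Hsplit: "\<And>x. (Y x \<bullet> b) * (H x \<bullet> b) = (Y x \<bullet> b) * ((H x - G x) \<bullet> b) + (G x \<bullet> b) * (Y x \<bullet> b)"
      by (simp add: inner_diff_left algebra_simps)
    have YH: "integrable M (\<lambda>x. (Y x \<bullet> b) * (H x \<bullet> b))"
      unfolding Hsplit using YZ GY by simp
    have "(\<integral>x. (Y x \<bullet> b) * (H x \<bullet> b) \<partial>M) = (\<integral>x. (Y x \<bullet> b) * real_cond_exp M F (\<lambda>x. H x \<bullet> b) x \<partial>M)"
      using real_cond_exp_intg(2)[OF YH YbF] by simp
    also have "\<dots> = (\<integral>x. 0 \<partial>M)"
      by (rule integral_cong_AE) (use ce[OF b] in auto)
    finally have YHe: "(\<integral>x. (Y x \<bullet> b) * (H x \<bullet> b) \<partial>M) = 0" by simp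
    have "(\<integral>x. (Y x \<bullet> b) * (H x \<bullet> b) \<partial>M) = (\<integral>x. (Y x \<bullet> b) * ((H x - G x) \<bullet> b) \<partial>M) + (\<integral>x. (G x \<bullet> b) * (Y x \<bullet> b) \<partial>M)"
      unfolding Hsplit by (rule Bochner_Integration.integral_add[OF YZ GY])
    with YHe GYe have "(\<integral>x. (Y x \<bullet> b) * ((H x - G x) \<bullet> b) \<partial>M) = 0" by simp
    with YZ show ?thesis by simp
  qed
  have eq: "\<And>x. Y x \<bullet> (H x - G x) = (\<Sum>b\<in>Basis. (Y x \<bullet> b) * ((H x - G x) \<bullet> b))"
    by (rule euclidean_inner)
  show "integrable M (\<lambda>x. Y x \<bullet> (H x - G x))"
    unfolding eq using comp by (intro Bochner_Integration.integrable_sum) auto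
  show "(\<integral>x. Y x \<bullet> (H x - G x) \<partial>M) = 0"
    unfolding eq using comp by (subst Bochner_Integration.integral_sum) auto
qed



lemma (in prob_space) indep_set_mono:
  assumes "indep_set A B" "A' \<subseteq> A" "B' \<subseteq> B"
  shows "indep_set A' B'"
  using assms unfolding indep_set_def
  by (elim indep_sets_mono_sets) (auto split: bool.split)

lemma gen_alg_subalg:
  assumes M: "prob_space M" and X: "X \<in> borel_measurable M"
  shows "sigma_finite_subalgebra M (gen_alg M X)"
proof -
  interpret prob_space M by (rule M)
  have "subalgebra M (gen_alg M X)"
    unfolding subalgebra_def gen_alg_def using sets_image_in_sets[OF _ X] by auto
  then have "finite_measure_subalgebra M (gen_alg M X)"
    by (simp add: finite_measure_subalgebra_def finite_measure_subalgebra_axioms_def finite_measure_axioms)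
  then show ?thesis by (rule finite_measure_subalgebra_is_sigma_finite)
qed

lemma grad_zero:
  fixes gf :: "'d::euclidean_space"
  assumes d: "(F has_derivative (\<lambda>v. gf \<bullet> v)) (at xs)" and m: "\<And>y. F xs \<le> F y"
  shows "gf = 0"
proof -
  have "(\<lambda>v. gf \<bullet> v) = (\<lambda>v. 0)"
    by (rule has_derivative_local_min[OF d]) (auto intro: always_eventually m)
  then have "gf \<bullet> gf = 0" by metis
  then show ?thesis by simp
qed


lemma sq_expand:
  fixes a b :: "'d::real_inner"
  shows "(norm (a + t *\<^sub>R b))\<^sup>2 = (norm a)\<^sup>2 + 2 * t * (a \<bullet> b) + t\<^sup>2 * (norm b)\<^sup>2"
proof -
  have "(norm (a + t *\<^sub>R b))\<^sup>2 = (a + t *\<^sub>R b) \<bullet> (a + t *\<^sub>R b)" by (rule power2_norm_eq_inner)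
  also have "\<dots> = a \<bullet> a + t * (a \<bullet> b) + t * (b \<bullet> a) + t * t * (b \<bullet> b)"
    by (simp add: inner_add_left inner_add_right algebra_simps)
  also have "b \<bullet> a = a \<bullet> b" by (rule inner_commute)
  finally have e: "(norm (a + t *\<^sub>R b))\<^sup>2 = a \<bullet> a + t * (a \<bullet> b) + t * (a \<bullet> b) + t * t * (b \<bullet> b)" .
  show ?thesis unfolding e power2_norm_eq_inner[of a] power2_norm_eq_inner[of b] by (simp add: power2_eq_square algebra_simps)
qed

lemma ennreal_pos_top: "(c::real) > 0 \<Longrightarrow> ennreal c * \<top> = \<top>" by simp

lemma nn_integral_add_cmult_le:
  fixes f g :: "'a \<Rightarrow> ennreal"
  assumes fm[measurable]: "f \<in> borel_measurable M" and r: "r > 0"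
  shows "(\<integral>\<^sup>+x. f x + ennreal r * g x \<partial>M) \<le> (\<integral>\<^sup>+x. f x \<partial>M) + ennreal r * (\<integral>\<^sup>+x. g x \<partial>M)"
  unfolding nn_integral_def_finite[of M "\<lambda>x. f x + ennreal r * g x"]
proof (rule SUP_least)
  fix h assume "h \<in> {g'. simple_function M g' \<and> g' \<le> (\<lambda>x. f x + ennreal r * g x) \<and> (\<forall>x. g' x < top)}"
  then have hs: "simple_function M h" and hle: "\<And>x. h x \<le> f x + ennreal r * g x" and hfin: "\<And>x. h x < top"
    by (auto simp: le_fun_def)
  have hm[measurable]: "h \<in> borel_measurable M" by (rule borel_measurable_simple_function[OF hs])
  have rr: "ennreal r * ennreal (1 / r) = 1" using r by (simp add: ennreal_mult[symmetric])
  define k where "k x = (if h x \<le> f x then 0 else (h x - f x) * ennreal (1 / r))" for x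
  have km[measurable]: "k \<in> borel_measurable M" unfolding k_def by measurable
  have kg: "k x \<le> g x" for x
  proof (cases "h x \<le> f x")
    case True then show ?thesis by (simp add: k_def)
  next
    case False
    have "h x - f x \<le> ennreal r * g x"
      unfolding ennreal_minus_le_iff using hle[of x] hfin[of x] by auto
    then have "(h x - f x) * ennreal (1 / r) \<le> ennreal r * g x * ennreal (1 / r)"
      by (rule mult_right_mono) simp
    also have "\<dots> = g x" by (metis rr mult.commute mult.assoc mult.right_neutral)
    finally show ?thesis using False by (simp add: k_def)
  qed
  have hk: "h x \<le> f x + ennreal r * k x" for x
  proof (cases "h x \<le> f x")
    case True then show ?thesis by (simp add: k_def)
  next
    case False
    have kx: "k x = (h x - f x) * ennreal (1 / r)" using False by (simp add: k_def)
    have "ennreal r * k x = (h x - f x) * (ennreal r * ennreal (1 / r))"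
      unfolding kx by (metis mult.commute mult.left_commute)
    then have "ennreal r * k x = h x - f x" using rr by simp
    then show ?thesis using False by (simp add: add_diff_inverse_ennreal)
  qed
  have "integral\<^sup>S M h = (\<integral>\<^sup>+x. h x \<partial>M)" by (rule nn_integral_eq_simple_integral[OF hs, symmetric])
  also have "\<dots> \<le> (\<integral>\<^sup>+x. f x + ennreal r * k x \<partial>M)" by (rule nn_integral_mono) (rule hk)
  also have "\<dots> = (\<integral>\<^sup>+x. f x \<partial>M) + ennreal r * (\<integral>\<^sup>+x. k x \<partial>M)"
    by (simp add: nn_integral_add nn_integral_cmult)
  also have "\<dots> \<le> (\<integral>\<^sup>+x. f x \<partial>M) + ennreal r * (\<integral>\<^sup>+x. g x \<partial>M)"
    by (intro add_left_mono mult_left_mono nn_integral_mono kg) simp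
  finally show "integral\<^sup>S M h \<le> (\<integral>\<^sup>+x. f x \<partial>M) + ennreal r * (\<integral>\<^sup>+x. g x \<partial>M)" .
qed

theorem mainTheorem2:
  fixes M :: "'a measure" and D :: "'e measure"
    and f :: "'e \<Rightarrow> 'd::euclidean_space \<Rightarrow> real"
    and gradf :: "'e \<Rightarrow> 'd \<Rightarrow> 'd"
    and \<mu> \<gamma> A1 B1 C1 A2 B2 C2 :: real
    and xstar x0 :: 'd and \<phi>0 :: "'m::euclidean_space"
    and x h :: "nat \<Rightarrow> 'a \<Rightarrow> 'd" and \<phi> :: "nat \<Rightarrow> 'a \<Rightarrow> 'm" and \<xi> :: "nat \<Rightarrow> 'a \<Rightarrow> 'e"
    and \<sigma>sq :: "'m \<Rightarrow> real"
    and k :: nat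
  assumes M: "prob_space M" and Dp: "prob_space D"
    \<comment> \<open>each f_xi is differentiable with gradient gradf xi, and mu-strongly convex\<close>
    and mu: "\<mu> > 0"
    and grad: "\<And>e x. (f e has_derivative (\<lambda>v. gradf e x \<bullet> v)) (at x)"
    and sconv: "\<And>e. strongly_convex \<mu> (f e)"
    \<comment> \<open>f = E[f_xi], grad f = E[grad f_xi]; xstar minimizes f\<close>
    and f_int: "\<And>y. integrable D (\<lambda>e. f e y)"
    and g_int: "\<And>y. integrable D (\<lambda>e. gradf e y)"
    and f_grad: "\<And>y. ((\<lambda>z. \<integral>e. f e z \<partial>D) has_derivative (\<lambda>v. (\<integral>e. gradf e y \<partial>D) \<bullet> v)) (at y)"
    and xstar: "\<And>y. (\<integral>e. f e xstar \<partial>D) \<le> (\<integral>e. f e y \<partial>D)"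
    \<comment> \<open>SPPM-LC\<close>
    and gam: "\<gamma> > 0"
    and x_rv: "\<And>j. x j \<in> borel_measurable M"
    and phi_rv: "\<And>j. \<phi> j \<in> borel_measurable M"
    and h_rv: "\<And>j. h j \<in> borel_measurable M"
    and xi_rv: "\<And>j. \<xi> j \<in> measurable M D"
    and xi_distr: "\<And>j. distr M D (\<xi> j) = D"
    and xi_indep: "\<And>j. prob_space.indep_set M (var_events M D (\<xi> j)) (past_events M D x \<phi> \<xi> j)"
    and x_init: "\<And>\<omega>. \<omega> \<in> space M \<Longrightarrow> x 0 \<omega> = x0"
    and phi_init: "\<And>\<omega>. \<omega> \<in> space M \<Longrightarrow> \<phi> 0 \<omega> = \<phi>0"
    and h_form: "\<And>j. \<exists>H. \<forall>\<omega>\<in>space M. h j \<omega> = H (x j \<omega>) (\<phi> j \<omega>) (\<xi> j \<omega>)"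
    and x_step: "\<And>j \<omega>. \<omega> \<in> space M \<Longrightarrow>
                   x (Suc j) \<omega> = prox \<gamma> (f (\<xi> j \<omega>)) (x j \<omega> + \<gamma> *\<^sub>R h j \<omega>)"
    \<comment> \<open>sigma_k^2-assumption\<close>
    and sig_nonneg: "\<And>p. \<sigma>sq p \<ge> 0"
    and cst: "A1 \<ge> 0" "B1 \<ge> 0" "C1 \<ge> 0" "A2 \<ge> 0" "B2 \<ge> 0" "C2 \<ge> 0" "B2 < 1"
    and h_int: "\<And>j. integrable M (h j)"
    and cond_i: "\<And>j b. b \<in> Basis \<Longrightarrow>
        AE \<omega> in M. real_cond_exp M (gen_alg M (\<lambda>\<omega>. (x j \<omega>, \<phi> j \<omega>))) (\<lambda>\<omega>. h j \<omega> \<bullet> b) \<omega> = 0"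
    and cond_ii: "\<And>j. AE \<omega> in M.
        nn_cond_exp M (gen_alg M (\<lambda>\<omega>. (x j \<omega>, \<phi> j \<omega>)))
          (\<lambda>\<omega>. ennreal ((norm (h j \<omega> - gradf (\<xi> j \<omega>) xstar))\<^sup>2)) \<omega>
        \<le> ennreal (A1 * (norm (x j \<omega> - xstar))\<^sup>2 + B1 * \<sigma>sq (\<phi> j \<omega>) + C1)"
    and cond_iii: "\<And>j. AE \<omega> in M.
        nn_cond_exp M (gen_alg M (\<lambda>\<omega>. (x (Suc j) \<omega>, \<phi> j \<omega>)))
          (\<lambda>\<omega>. ennreal (\<sigma>sq (\<phi> (Suc j) \<omega>))) \<omega>
        \<le> ennreal (A2 * (norm (x (Suc j) \<omega> - xstar))\<^sup>2 + B2 * \<sigma>sq (\<phi> j \<omega>) + C2)"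
  shows "(\<integral>\<^sup>+\<omega>. ennreal ((norm (x (Suc k) \<omega> - xstar))\<^sup>2) \<partial>M)
      \<le> ennreal ((1 + \<gamma>\<^sup>2 * A1) / (1 + \<gamma> * \<mu>)\<^sup>2) * (\<integral>\<^sup>+\<omega>. ennreal ((norm (x k \<omega> - xstar))\<^sup>2) \<partial>M)
        + ennreal (\<gamma>\<^sup>2 * B1 / (1 + \<gamma> * \<mu>)\<^sup>2) * (\<integral>\<^sup>+\<omega>. ennreal (\<sigma>sq (\<phi> k \<omega>)) \<partial>M)
        + ennreal (\<gamma>\<^sup>2 * C1 / (1 + \<gamma> * \<mu>)\<^sup>2)"
proof -
  interpret prob_space M by (rule M)
  define X where "X = (\<lambda>\<omega>. (x k \<omega>, \<phi> k \<omega>))"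
  define F where "F = gen_alg M X"
  define Y where "Y = (\<lambda>\<omega>. x k \<omega> - xstar)"
  define G where "G = (\<lambda>\<omega>. gradf (\<xi> k \<omega>) xstar)"
  define H where "H = h k"
  define c where "c = 1 + \<gamma> * \<mu>"
  have c0: "c > 0" using gam mu by (simp add: c_def add_pos_pos)
  have Xm[measurable]: "X \<in> borel_measurable M" unfolding X_def using x_rv phi_rv by measurable
  have Fsub: "sigma_finite_subalgebra M F" unfolding F_def by (rule gen_alg_subalg[OF M Xm])
  have XF: "X \<in> measurable F borel" unfolding F_def gen_alg_def
    by (rule measurable_vimage_algebra1) simp
  have cfst: "(\<lambda>p::'d \<times> 'm. fst p - xstar) \<in> borel_measurable borel"
    by (intro borel_measurable_continuous_onI continuous_intros)
  have YF: "Y \<in> borel_measurable F"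
    using measurable_compose[OF XF cfst] unfolding Y_def X_def by simp
  have Ym[measurable]: "Y \<in> borel_measurable M" unfolding Y_def using x_rv by measurable
  have gD[measurable]: "(\<lambda>e. gradf e xstar) \<in> borel_measurable D" using g_int[of xstar] by auto
  have xim[measurable]: "\<xi> k \<in> measurable M D" by (rule xi_rv)
  have Gm[measurable]: "G \<in> borel_measurable M" unfolding G_def by measurable
  have Hm[measurable]: "H \<in> borel_measurable M" unfolding H_def by (rule h_rv)
  have Gi: "integrable M G"
    using integrable_distr_eq[OF xim gD] g_int[of xstar] xi_distr[of k] unfolding G_def by simp
  have gz: "(\<integral>e. gradf e xstar \<partial>D) = 0"
    by (rule grad_zero[OF f_grad xstar])
  have G0: "(\<integral>\<omega>. G \<omega> \<bullet> b \<partial>M) = 0" if "b \<in> Basis" for b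
  proof -
    have "(\<integral>\<omega>. G \<omega> \<bullet> b \<partial>M) = (\<integral>e. gradf e xstar \<bullet> b \<partial>(distr M D (\<xi> k)))"
      unfolding G_def by (rule integral_distr[symmetric]) measurable
    also have "\<dots> = (\<integral>e. gradf e xstar \<bullet> b \<partial>D)" using xi_distr[of k] by simp
    also have "\<dots> = (\<integral>e. gradf e xstar \<partial>D) \<bullet> b" using g_int[of xstar] by simp
    finally show ?thesis using gz by simp
  qed
  have ind: "indep_var borel (\<lambda>\<omega>. G \<omega> \<bullet> b) borel (\<lambda>\<omega>. Y \<omega> \<bullet> b)" if b: "b \<in> Basis" for b
  proof -
    define N where "N = vimage_algebra (space M) (\<xi> k) D"
    have xisp: "\<xi> k \<in> space M \<rightarrow> space D" using measurable_space[OF xim] by auto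
    have VN: "var_events M D (\<xi> k) = sets N"
      unfolding N_def var_events_def using sets_vimage_algebra2[OF xisp] by simp
    have GN: "(\<lambda>\<omega>. G \<omega> \<bullet> b) \<in> borel_measurable N"
    proof -
      have "\<xi> k \<in> measurable N D" unfolding N_def by (rule measurable_vimage_algebra1[OF xisp])
      moreover have "(\<lambda>e. gradf e xstar \<bullet> b) \<in> borel_measurable D" by measurable
      ultimately show ?thesis using measurable_compose by (fastforce simp: G_def)
    qed
    have S1: "sigma_sets (space M) {(\<lambda>\<omega>. G \<omega> \<bullet> b) -` A \<inter> space M | A. A \<in> sets borel} \<subseteq> var_events M D (\<xi> k)"
    proof -
      have "sigma_sets (space N) {(\<lambda>\<omega>. G \<omega> \<bullet> b) -` A \<inter> space N | A. A \<in> sets borel} \<subseteq> sets N"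
        by (rule sets.sigma_sets_subset) (auto intro: measurable_sets[OF GN])
      then show ?thesis unfolding VN by (simp add: N_def)
    qed
    have S2: "sigma_sets (space M) {(\<lambda>\<omega>. Y \<omega> \<bullet> b) -` A \<inter> space M | A. A \<in> sets borel} \<subseteq> past_events M D x \<phi> \<xi> k"
      unfolding past_events_def
    proof (rule sigma_sets_mono')
      show "{(\<lambda>\<omega>. Y \<omega> \<bullet> b) -` A \<inter> space M | A. A \<in> sets borel} \<subseteq>
        (\<Union>j\<le>k. {x j -` A \<inter> space M | A. A \<in> sets borel}) \<union> (\<Union>j\<le>k. {\<phi> j -` A \<inter> space M | A. A \<in> sets borel})
        \<union> (\<Union>j<k. {\<xi> j -` A \<inter> space M | A. A \<in> sets D})"
      proof
        fix S assume "S \<in> {(\<lambda>\<omega>. Y \<omega> \<bullet> b) -` A \<inter> space M | A. A \<in> sets borel}"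
        then obtain A where A: "A \<in> sets borel" and S: "S = (\<lambda>\<omega>. Y \<omega> \<bullet> b) -` A \<inter> space M" by auto
        have fm: "(\<lambda>z. (z - xstar) \<bullet> b) \<in> borel_measurable borel"
          by (intro borel_measurable_continuous_onI continuous_intros)
        have B: "(\<lambda>z. (z - xstar) \<bullet> b) -` A \<inter> space borel \<in> sets borel"
          by (rule measurable_sets[OF fm A])
        have "S = x k -` ((\<lambda>z. (z - xstar) \<bullet> b) -` A \<inter> space borel) \<inter> space M"
          unfolding S Y_def by auto
        with B have "S \<in> {x k -` A \<inter> space M | A. A \<in> sets borel}" by blast
        then show "S \<in> (\<Union>j\<le>k. {x j -` A \<inter> space M | A. A \<in> sets borel}) \<union> (\<Union>j\<le>k. {\<phi> j -` A \<inter> space M | A. A \<in> sets borel})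
          \<union> (\<Union>j<k. {\<xi> j -` A \<inter> space M | A. A \<in> sets D})" by blast
      qed
    qed
    show ?thesis
      unfolding indep_var_eq
    proof (intro conjI)
      show "random_variable borel (\<lambda>\<omega>. G \<omega> \<bullet> b)" by measurable
      show "random_variable borel (\<lambda>\<omega>. Y \<omega> \<bullet> b)" by measurable
      show "indep_set (sigma_sets (space M) {(\<lambda>\<omega>. G \<omega> \<bullet> b) -` A \<inter> space M | A. A \<in> sets borel})
                      (sigma_sets (space M) {(\<lambda>\<omega>. Y \<omega> \<bullet> b) -` A \<inter> space M | A. A \<in> sets borel})"
        by (rule indep_set_mono[OF xi_indep[of k] S1 S2])
    qed
  qed
  have ce: "AE \<omega> in M. real_cond_exp M F (\<lambda>\<omega>. H \<omega> \<bullet> b) \<omega> = 0" if "b \<in> Basis" for b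
    using cond_i[OF that, of k] unfolding F_def X_def H_def .
  have pw: "(norm (x (Suc k) \<omega> - xstar))\<^sup>2 \<le> (norm (Y \<omega> + \<gamma> *\<^sub>R (H \<omega> - G \<omega>)))\<^sup>2 / c\<^sup>2"
    if \<omega>: "\<omega> \<in> space M" for \<omega>
  proof -
    have "c * norm (x (Suc k) \<omega> - xstar) \<le> norm ((x k \<omega> + \<gamma> *\<^sub>R h k \<omega>) - (xstar + \<gamma> *\<^sub>R gradf (\<xi> k \<omega>) xstar))"
      unfolding x_step[OF \<omega>] c_def by (rule prox_main[OF sconv mu grad gam])
    also have "(x k \<omega> + \<gamma> *\<^sub>R h k \<omega>) - (xstar + \<gamma> *\<^sub>R gradf (\<xi> k \<omega>) xstar) = Y \<omega> + \<gamma> *\<^sub>R (H \<omega> - G \<omega>)"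
      unfolding Y_def H_def G_def by (simp add: algebra_simps)
    finally have "c * norm (x (Suc k) \<omega> - xstar) \<le> norm (Y \<omega> + \<gamma> *\<^sub>R (H \<omega> - G \<omega>))" .
    then have "(c * norm (x (Suc k) \<omega> - xstar))\<^sup>2 \<le> (norm (Y \<omega> + \<gamma> *\<^sub>R (H \<omega> - G \<omega>)))\<^sup>2"
      using c0 by (intro power_mono) auto
    then show ?thesis using c0 by (simp add: field_simps power_mult_distrib)
  qed
  define NY where "NY = (\<integral>\<^sup>+\<omega>. ennreal ((norm (Y \<omega>))\<^sup>2) \<partial>M)"
  define NZ where "NZ = (\<integral>\<^sup>+\<omega>. ennreal ((norm (H \<omega> - G \<omega>))\<^sup>2) \<partial>M)"
  define NS where "NS = (\<integral>\<^sup>+\<omega>. ennreal (\<sigma>sq (\<phi> k \<omega>)) \<partial>M)"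
  have a1: "1 / c\<^sup>2 > 0" "\<gamma>\<^sup>2 / c\<^sup>2 > 0" using c0 gam by auto
  have K: "(\<integral>\<^sup>+\<omega>. ennreal ((norm (x (Suc k) \<omega> - xstar))\<^sup>2) \<partial>M) \<le> ennreal (1 / c\<^sup>2) * NY + ennreal (\<gamma>\<^sup>2 / c\<^sup>2) * NZ"
  proof (cases "NY = \<infinity> \<or> NZ = \<infinity>")
    case True
    have n1: "ennreal (1 / c\<^sup>2) \<noteq> 0" "ennreal (\<gamma>\<^sup>2 / c\<^sup>2) \<noteq> 0" using a1 by auto
    from True have "ennreal (1 / c\<^sup>2) * NY + ennreal (\<gamma>\<^sup>2 / c\<^sup>2) * NZ = (\<top>::ennreal)"
    proof
      assume "NY = \<infinity>" then show ?thesis using n1 by simp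
    next
      assume "NZ = \<infinity>" then show ?thesis using n1 by simp
    qed
    then show ?thesis by (metis top_greatest)
  next
    case False
    have Y2: "integrable M (\<lambda>\<omega>. (norm (Y \<omega>))\<^sup>2)"
    proof (rule integrableI_nonneg)
      show "(\<lambda>\<omega>. (norm (Y \<omega>))\<^sup>2) \<in> borel_measurable M" by measurable
      show "AE \<omega> in M. 0 \<le> (norm (Y \<omega>))\<^sup>2" by simp
      show "(\<integral>\<^sup>+\<omega>. ennreal ((norm (Y \<omega>))\<^sup>2) \<partial>M) < \<infinity>" using False unfolding NY_def by (simp add: less_top)
    qed
    have Z2: "integrable M (\<lambda>\<omega>. (norm (H \<omega> - G \<omega>))\<^sup>2)"
    proof (rule integrableI_nonneg)
      show "(\<lambda>\<omega>. (norm (H \<omega> - G \<omega>))\<^sup>2) \<in> borel_measurable M" by measurable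
      show "AE \<omega> in M. 0 \<le> (norm (H \<omega> - G \<omega>))\<^sup>2" by simp
      show "(\<integral>\<^sup>+\<omega>. ennreal ((norm (H \<omega> - G \<omega>))\<^sup>2) \<partial>M) < \<infinity>" using False unfolding NZ_def by (simp add: less_top)
    qed
    note cz = cross_zero[OF Fsub YF Hm Gm Y2 Z2 Gi G0 ind ce]
    define Q where "Q = (\<lambda>\<omega>. (norm (Y \<omega>))\<^sup>2 + 2 * \<gamma> * (Y \<omega> \<bullet> (H \<omega> - G \<omega>)) + \<gamma>\<^sup>2 * (norm (H \<omega> - G \<omega>))\<^sup>2)"
    have Qeq: "(norm (Y \<omega> + \<gamma> *\<^sub>R (H \<omega> - G \<omega>)))\<^sup>2 = Q \<omega>" for \<omega>
      unfolding Q_def by (rule sq_expand)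
    have Qi: "integrable M Q" unfolding Q_def using Y2 Z2 cz(1) by simp
    have QI: "(\<integral>\<omega>. Q \<omega> \<partial>M) = (\<integral>\<omega>. (norm (Y \<omega>))\<^sup>2 \<partial>M) + \<gamma>\<^sup>2 * (\<integral>\<omega>. (norm (H \<omega> - G \<omega>))\<^sup>2 \<partial>M)"
      unfolding Q_def using Y2 Z2 cz by simp
    have Q0: "Q \<omega> \<ge> 0" for \<omega> unfolding Qeq[symmetric] by simp
    have NYe: "NY = ennreal (\<integral>\<omega>. (norm (Y \<omega>))\<^sup>2 \<partial>M)"
      unfolding NY_def by (rule nn_integral_eq_integral[OF Y2]) simp
    have NZe: "NZ = ennreal (\<integral>\<omega>. (norm (H \<omega> - G \<omega>))\<^sup>2 \<partial>M)"
      unfolding NZ_def by (rule nn_integral_eq_integral[OF Z2]) simp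
    have "(\<integral>\<^sup>+\<omega>. ennreal ((norm (x (Suc k) \<omega> - xstar))\<^sup>2) \<partial>M) \<le> (\<integral>\<^sup>+\<omega>. ennreal (Q \<omega> / c\<^sup>2) \<partial>M)"
      by (rule nn_integral_mono) (use pw Qeq in \<open>auto intro: ennreal_leI\<close>)
    also have "\<dots> = ennreal (\<integral>\<omega>. Q \<omega> / c\<^sup>2 \<partial>M)"
      by (rule nn_integral_eq_integral) (use Qi Q0 in auto)
    also have "(\<integral>\<omega>. Q \<omega> / c\<^sup>2 \<partial>M) = 1 / c\<^sup>2 * (\<integral>\<omega>. (norm (Y \<omega>))\<^sup>2 \<partial>M) + \<gamma>\<^sup>2 / c\<^sup>2 * (\<integral>\<omega>. (norm (H \<omega> - G \<omega>))\<^sup>2 \<partial>M)"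
      using QI by (simp add: add_divide_distrib)
    also have "ennreal \<dots> = ennreal (1 / c\<^sup>2) * NY + ennreal (\<gamma>\<^sup>2 / c\<^sup>2) * NZ"
    proof -
      define EY where "EY = (\<integral>\<omega>. (norm (Y \<omega>))\<^sup>2 \<partial>M)"
      define EZ where "EZ = (\<integral>\<omega>. (norm (H \<omega> - G \<omega>))\<^sup>2 \<partial>M)"
      have EY0: "EY \<ge> 0" unfolding EY_def by (intro integral_nonneg_AE) simp
      have EZ0: "EZ \<ge> 0" unfolding EZ_def by (intro integral_nonneg_AE) simp
      have "ennreal (1 / c\<^sup>2 * EY + \<gamma>\<^sup>2 / c\<^sup>2 * EZ) = ennreal (1 / c\<^sup>2 * EY) + ennreal (\<gamma>\<^sup>2 / c\<^sup>2 * EZ)"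
        by (rule ennreal_plus) (use EY0 EZ0 a1 in auto)
      also have "ennreal (1 / c\<^sup>2 * EY) = ennreal (1 / c\<^sup>2) * ennreal EY"
        by (rule ennreal_mult) (use EY0 a1 in auto)
      also have "ennreal (\<gamma>\<^sup>2 / c\<^sup>2 * EZ) = ennreal (\<gamma>\<^sup>2 / c\<^sup>2) * ennreal EZ"
        by (rule ennreal_mult) (use EZ0 a1 in auto)
      finally show ?thesis unfolding NYe NZe EY_def EZ_def .
    qed
    finally show ?thesis .
  qed
  have ZF: "(\<lambda>\<omega>. ennreal ((norm (H \<omega> - G \<omega>))\<^sup>2)) \<in> borel_measurable M" by measurable
  have NZb: "NZ \<le> ennreal A1 * NY + ennreal B1 * NS + ennreal C1"
  proof -
    interpret sigma_finite_subalgebra M F by (rule Fsub)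
    have "NZ = (\<integral>\<^sup>+\<omega>. 1 * ennreal ((norm (H \<omega> - G \<omega>))\<^sup>2) \<partial>M)" unfolding NZ_def by simp
    also have "\<dots> = (\<integral>\<^sup>+\<omega>. 1 * nn_cond_exp M F (\<lambda>\<omega>. ennreal ((norm (H \<omega> - G \<omega>))\<^sup>2)) \<omega> \<partial>M)"
      by (rule nn_cond_exp_intg[symmetric]) (use ZF in auto)
    also have "\<dots> \<le> (\<integral>\<^sup>+\<omega>. ennreal (A1 * (norm (Y \<omega>))\<^sup>2 + B1 * \<sigma>sq (\<phi> k \<omega>) + C1) \<partial>M)"
      by (rule nn_integral_mono_AE) (use cond_ii[of k] in \<open>simp add: F_def X_def H_def G_def Y_def\<close>)
    also have "\<dots> = (\<integral>\<^sup>+\<omega>. (ennreal A1 * ennreal ((norm (Y \<omega>))\<^sup>2) + ennreal C1) + ennreal B1 * ennreal (\<sigma>sq (\<phi> k \<omega>)) \<partial>M)"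
      using cst sig_nonneg by (intro nn_integral_cong) (simp add: ennreal_mult ac_simps)
    also have "\<dots> \<le> (\<integral>\<^sup>+\<omega>. ennreal A1 * ennreal ((norm (Y \<omega>))\<^sup>2) + ennreal C1 \<partial>M) + ennreal B1 * NS"
    proof (cases "B1 = 0")
      case True then show ?thesis by simp
    next
      case False
      then have "B1 > 0" using cst by simp
      have "(\<lambda>\<omega>. ennreal A1 * ennreal ((norm (Y \<omega>))\<^sup>2) + ennreal C1) \<in> borel_measurable M" by measurable
      from nn_integral_add_cmult_le[OF this \<open>B1 > 0\<close>, of "\<lambda>\<omega>. ennreal (\<sigma>sq (\<phi> k \<omega>))"]
      show ?thesis unfolding NS_def .
    qed
    also have "(\<integral>\<^sup>+\<omega>. ennreal A1 * ennreal ((norm (Y \<omega>))\<^sup>2) + ennreal C1 \<partial>M) = ennreal A1 * NY + ennreal C1"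
    proof -
      have m1: "(\<lambda>\<omega>. ennreal ((norm (Y \<omega>))\<^sup>2)) \<in> borel_measurable M" by measurable
      have "(\<integral>\<^sup>+\<omega>. ennreal A1 * ennreal ((norm (Y \<omega>))\<^sup>2) + ennreal C1 \<partial>M)
          = (\<integral>\<^sup>+\<omega>. ennreal A1 * ennreal ((norm (Y \<omega>))\<^sup>2) \<partial>M) + (\<integral>\<^sup>+\<omega>. ennreal C1 \<partial>M)"
        by (rule nn_integral_add) (use m1 in auto)
      also have "(\<integral>\<^sup>+\<omega>. ennreal A1 * ennreal ((norm (Y \<omega>))\<^sup>2) \<partial>M) = ennreal A1 * NY"
        unfolding NY_def by (rule nn_integral_cmult[OF m1])
      also have "(\<integral>\<^sup>+\<omega>. ennreal C1 \<partial>M) = ennreal C1" by (simp add: emeasure_space_1)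
      finally show ?thesis .
    qed
    also have "ennreal A1 * NY + ennreal C1 + ennreal B1 * NS = ennreal A1 * NY + ennreal B1 * NS + ennreal C1"
      by (simp add: ac_simps)
    finally show ?thesis .
  qed
  have "(\<integral>\<^sup>+\<omega>. ennreal ((norm (x (Suc k) \<omega> - xstar))\<^sup>2) \<partial>M)
      \<le> ennreal (1 / c\<^sup>2) * NY + ennreal (\<gamma>\<^sup>2 / c\<^sup>2) * (ennreal A1 * NY + ennreal B1 * NS + ennreal C1)"
  proof -
    have "ennreal (\<gamma>\<^sup>2 / c\<^sup>2) * NZ \<le> ennreal (\<gamma>\<^sup>2 / c\<^sup>2) * (ennreal A1 * NY + ennreal B1 * NS + ennreal C1)"
      by (rule mult_left_mono[OF NZb]) simp
    then have "ennreal (1 / c\<^sup>2) * NY + ennreal (\<gamma>\<^sup>2 / c\<^sup>2) * NZ \<le> ennreal (1 / c\<^sup>2) * NY + ennreal (\<gamma>\<^sup>2 / c\<^sup>2) * (ennreal A1 * NY + ennreal B1 * NS + ennreal C1)"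
      by (rule add_left_mono)
    with K show ?thesis by (rule order_trans)
  qed
  also have "\<dots> = ennreal ((1 + \<gamma>\<^sup>2 * A1) / (1 + \<gamma> * \<mu>)\<^sup>2) * NY
        + ennreal (\<gamma>\<^sup>2 * B1 / (1 + \<gamma> * \<mu>)\<^sup>2) * NS + ennreal (\<gamma>\<^sup>2 * C1 / (1 + \<gamma> * \<mu>)\<^sup>2)"
  proof -
    have r1: "(1 + \<gamma>\<^sup>2 * A1) / (1 + \<gamma> * \<mu>)\<^sup>2 = 1 / c\<^sup>2 + \<gamma>\<^sup>2 / c\<^sup>2 * A1"
      by (simp add: c_def add_divide_distrib)
    have r2: "\<gamma>\<^sup>2 * B1 / (1 + \<gamma> * \<mu>)\<^sup>2 = \<gamma>\<^sup>2 / c\<^sup>2 * B1" by (simp add: c_def)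
    have r3: "\<gamma>\<^sup>2 * C1 / (1 + \<gamma> * \<mu>)\<^sup>2 = \<gamma>\<^sup>2 / c\<^sup>2 * C1" by (simp add: c_def)
    have e1: "ennreal ((1 + \<gamma>\<^sup>2 * A1) / (1 + \<gamma> * \<mu>)\<^sup>2) = ennreal (1 / c\<^sup>2) + ennreal (\<gamma>\<^sup>2 / c\<^sup>2) * ennreal A1"
    proof -
      have "ennreal (1 / c\<^sup>2 + \<gamma>\<^sup>2 / c\<^sup>2 * A1) = ennreal (1 / c\<^sup>2) + ennreal (\<gamma>\<^sup>2 / c\<^sup>2 * A1)"
        by (rule ennreal_plus) (use a1 cst in auto)
      also have "ennreal (\<gamma>\<^sup>2 / c\<^sup>2 * A1) = ennreal (\<gamma>\<^sup>2 / c\<^sup>2) * ennreal A1"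
        by (rule ennreal_mult) (use a1 cst in auto)
      finally show ?thesis unfolding r1 .
    qed
    have e2: "ennreal (\<gamma>\<^sup>2 * B1 / (1 + \<gamma> * \<mu>)\<^sup>2) = ennreal (\<gamma>\<^sup>2 / c\<^sup>2) * ennreal B1"
      unfolding r2 by (rule ennreal_mult) (use a1 cst in auto)
    have e3: "ennreal (\<gamma>\<^sup>2 * C1 / (1 + \<gamma> * \<mu>)\<^sup>2) = ennreal (\<gamma>\<^sup>2 / c\<^sup>2) * ennreal C1"
      unfolding r3 by (rule ennreal_mult) (use a1 cst in auto)
    show ?thesis unfolding e1 e2 e3 by (simp add: distrib_left distrib_right mult.assoc add.assoc)
  qed
  finally show ?thesis unfolding NY_def NS_def Y_def .
qed

end
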